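(* Let $Y$ be a topological space, $\mathcal X=(X_i)_{i\in I_Y}$ a family of nonempty spaces, and let $\widetilde Y$ be a space containing $Y$ as a dense subspace and, for each $i\in I_Y$, $\widetilde X_i$ a space containing $X_i$ as a subspace; put $\widetilde{\mathcal X}=(\widetilde X_i)_{i\in I_Y}$ (note $I_Y=I_{\widetilde Y}$). Then $Z(Y,\mathcal X)$ is a subspace of $Z(\widetilde Y,\widetilde{\mathcal X})$ and \[ \mathrm{Compl}\big(Z(Y,\mathcal X),Z(\widetilde Y,\widetilde{\mathcal X})\big)=\max\Big\{\mathrm{Compl}(Y,\widetilde Y),\ \sup_{i\in I_Y}\mathrm{Compl}(X_i,\widetilde X_i)\Big\}, \] whenever at least one of the two sides is defined (in which case both are).
   Context: All spaces are Tychonoff. For a space $Y$, $I_Y$ denotes its set of isolated points and $Y'=Y\setminus I_Y$. Zoom space: for a space $Y$ and a family $\mathcal X=(X_i)_{i\in I_Y}$ of nonempty pairwise disjoint spaces (disjoint from $Y'$), $Z(Y,\mathcal X)$ is the set $Y'\cup\bigcup_{i\in I_Y}X_i$ with the topology whose basis consists of all open subsets of the $X_i$, $i\in I_Y$, and all sets $V_U=(U\setminus I_Y)\cup\bigcup\{X_i: i\in U\cap I_Y\}$ for $U$ open in $Y$. $\mathcal F$-Borel hierarchy: $\mathcal F_0(Y)$ closed sets; for $0<\alpha<\omega_1$, $\mathcal F_\alpha(Y)$ is the family of countable unions (if $\alpha$ odd) or countable intersections (if $\alpha$ even) of members of $\bigcup_{\beta<\alpha}\mathcal F_\beta(Y)$,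 where $\lambda+m$ ($\lambda$ limit or 0, $m\in\omega$) has the parity of $m$; $\mathcal F_{\omega_1}(Y)$ is the family of Suslin-$\mathcal F$ sets $\bigcup_{\sigma\in\omega^\omega}\bigcap_k F_{\sigma(0),\dots,\sigma(k)}$ ($F_{\dots}$ closed). For $A\subset B$, $\mathrm{Compl}(A,B)$ is the least $\alpha\le\omega_1$ with $A\in\mathcal F_\alpha(B)$ (defined iff $A\in\mathcal F_{\omega_1}(B)$). *)

theory Defs
  imports "HOL-Analysis.Analysis"
begin

definition tychonoff_space :: "'a topology \<Rightarrow> bool" where
  "tychonoff_space X \<longleftrightarrow> completely_regular_space X \<and> t1_space X"

definition isolated_points :: "'a topology \<Rightarrow> 'a set" where
  "isolated_points Y = {y \<in> topspace Y. openin Y {y}}"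

definition nonisolated_points :: "'a topology \<Rightarrow> 'a set" where
  "nonisolated_points Y = topspace Y - isolated_points Y"

definition zoom_V :: "'a topology \<Rightarrow> ('a \<Rightarrow> 'a topology) \<Rightarrow> 'a set \<Rightarrow> 'a set" where
  "zoom_V Y X U = (U - isolated_points Y) \<union> (\<Union>i \<in> U \<inter> isolated_points Y. topspace (X i))"

definition zoom_space :: "'a topology \<Rightarrow> ('a \<Rightarrow> 'a topology) \<Rightarrow> 'a topology" where
  "zoom_space Y X = topology_generated_by
     ({V. \<exists>i \<in> isolated_points Y. openin (X i) V} \<union> {zoom_V Y X U | U. openin Y U})"

text \<open>The ordinals \<open>\<le> \<omega>\<^sub>1\<close> are modelled by an arbitrary well-ordered type with a top
  element whose order type is \<open>\<omega>\<^sub>1 + 1\<close>: the top element is \<open>\<omega>\<^sub>1\<close>, it has uncountably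
  many predecessors, and every smaller element has only countably many predecessors.\<close>
definition omega1_plus_one_type :: "'o::{wellorder,order_top} itself \<Rightarrow> bool" where
  "omega1_plus_one_type _ \<longleftrightarrow>
     \<not> countable {\<alpha>::'o. \<alpha> < top} \<and> (\<forall>\<alpha>::'o. \<alpha> < top \<longrightarrow> countable {\<beta>. \<beta> < \<alpha>})"

definition limit_or_zero :: "'o::wellorder \<Rightarrow> bool" where
  "limit_or_zero \<alpha> \<longleftrightarrow> (\<forall>\<beta><\<alpha>. \<exists>\<gamma>. \<beta> < \<gamma> \<and> \<gamma> < \<alpha>)"

text \<open>\<open>\<alpha> = \<lambda> + m\<close> with \<open>\<lambda>\<close> limit or zero, \<open>m \<in> \<omega>\<close>; \<open>\<alpha>\<close> is odd iff m is odd
  (m is the number of ordinals in the interval \<open>(\<lambda>, \<alpha>]\<close>).\<close>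
definition ord_odd :: "'o::wellorder \<Rightarrow> bool" where
  "ord_odd \<alpha> \<longleftrightarrow> (\<exists>l. limit_or_zero l \<and> l \<le> \<alpha> \<and> finite {\<gamma>. l < \<gamma> \<and> \<gamma> \<le> \<alpha>}
                          \<and> odd (card {\<gamma>. l < \<gamma> \<and> \<gamma> \<le> \<alpha>}))"

definition ord_sup :: "'o::{wellorder,order_top} set \<Rightarrow> 'o" where
  "ord_sup S = (LEAST \<alpha>. \<forall>\<beta>\<in>S. \<beta> \<le> \<alpha>)"

inductive Fclass :: "'a topology \<Rightarrow> 'o::{wellorder,order_top} \<Rightarrow> 'a set \<Rightarrow> bool"
  for B :: "'a topology" where
  zero: "(\<forall>\<beta>. \<alpha> \<le> \<beta>) \<Longrightarrow> closedin B A \<Longrightarrow> Fclass B \<alpha> A"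
| odd_union: "\<alpha> < top \<Longrightarrow> \<not> (\<forall>\<beta>. \<alpha> \<le> \<beta>) \<Longrightarrow> ord_odd \<alpha> \<Longrightarrow>
     (\<forall>n::nat. \<exists>\<beta><\<alpha>. Fclass B \<beta> (A n)) \<Longrightarrow> Fclass B \<alpha> (\<Union>n. A n)"
| even_inter: "\<alpha> < top \<Longrightarrow> \<not> (\<forall>\<beta>. \<alpha> \<le> \<beta>) \<Longrightarrow> \<not> ord_odd \<alpha> \<Longrightarrow>
     (\<forall>n::nat. \<exists>\<beta><\<alpha>. Fclass B \<beta> (A n)) \<Longrightarrow> Fclass B \<alpha> (\<Inter>n. A n)"
| suslin: "(\<forall>s. closedin B (F s)) \<Longrightarrow>
     Fclass B top (\<Union>\<sigma>::nat \<Rightarrow> nat. \<Inter>k. F (map \<sigma> [0..<Suc k]))"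

definition Compl_defined :: "'a set \<Rightarrow> 'a topology \<Rightarrow> 'o::{wellorder,order_top} itself \<Rightarrow> bool" where
  "Compl_defined A B _ \<longleftrightarrow> Fclass B (top::'o) A"

definition Complexity :: "'a set \<Rightarrow> 'a topology \<Rightarrow> 'o::{wellorder,order_top}" where
  "Complexity A B = (LEAST \<alpha>. Fclass B \<alpha> A)"

end

theory Submission
  imports Defs
begin



lemma lim_infinite:
  fixes l1 l2 :: "'o::wellorder"
  assumes "limit_or_zero l2" "l1 < l2"
  shows "infinite {\<gamma>. l1 < \<gamma> \<and> \<gamma> < l2}"
proof
  let ?S = "{\<gamma>. l1 < \<gamma> \<and> \<gamma> < l2}"
  assume fin: "finite ?S"
  obtain g where g: "l1 < g" "g < l2" using assms unfolding limit_or_zero_def by blast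
  hence ne: "?S \<noteq> {}" by blast
  have "Max ?S \<in> ?S" using Max_in[OF fin ne] .
  then obtain h where h: "Max ?S < h" "h < l2" using assms(1) unfolding limit_or_zero_def by blast
  have "h \<in> ?S" using h \<open>Max ?S \<in> ?S\<close> by auto
  hence "h \<le> Max ?S" using Max_ge[OF fin] by blast
  thus False using h by simp
qed

lemma lim_not_odd:
  fixes a :: "'o::wellorder"
  assumes "limit_or_zero a"
  shows "\<not> ord_odd a"
proof
  assume "ord_odd a"
  then obtain l where l: "limit_or_zero l" "l \<le> a" "finite {\<gamma>. l < \<gamma> \<and> \<gamma> \<le> a}"
     "odd (card {\<gamma>. l < \<gamma> \<and> \<gamma> \<le> a})" unfolding ord_odd_def by blast
  show False
  proof (cases "l = a")
    case True
    have "{\<gamma>. l < \<gamma> \<and> \<gamma> \<le> a} = {}" using True by (auto simp: not_less[symmetric])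
    thus False using l(4) by (metis card.empty even_zero)
  next
    case False
    hence "l < a" using l(2) by simp
    have "{\<gamma>. l < \<gamma> \<and> \<gamma> < a} \<subseteq> {\<gamma>. l < \<gamma> \<and> \<gamma> \<le> a}" by auto
    thus False using lim_infinite[OF assms \<open>l < a\<close>] l(3) finite_subset by blast
  qed
qed

lemma odd_flip:
  fixes s1 s2 :: "'o::wellorder"
  assumes "s1 < s2" "\<forall>z. \<not> (s1 < z \<and> z < s2)" "ord_odd s1"
  shows "\<not> ord_odd s2"
proof
  assume "ord_odd s2"
  then obtain l2 where l2: "limit_or_zero l2" "l2 \<le> s2" "finite {\<gamma>. l2 < \<gamma> \<and> \<gamma> \<le> s2}"
     "odd (card {\<gamma>. l2 < \<gamma> \<and> \<gamma> \<le> s2})" unfolding ord_odd_def by blast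
  obtain l1 where l1: "limit_or_zero l1" "l1 \<le> s1" "finite {\<gamma>. l1 < \<gamma> \<and> \<gamma> \<le> s1}"
     "odd (card {\<gamma>. l1 < \<gamma> \<and> \<gamma> \<le> s1})" using assms(3) unfolding ord_odd_def by blast
  have "l2 \<noteq> s2" using l2(4) by (metis (no_types, lifting) Collect_empty_eq card.empty leD odd_card_imp_not_empty)
  hence "l2 < s2" using l2(2) by simp
  hence "l2 \<le> s1" using assms(2) by (metis leI)
  have "l1 = l2"
  proof (rule ccontr)
    assume "l1 \<noteq> l2"
    hence "l1 < l2 \<or> l2 < l1" by auto
    thus False
    proof
      assume "l1 < l2"
      have "{\<gamma>. l1 < \<gamma> \<and> \<gamma> < l2} \<subseteq> {\<gamma>. l1 < \<gamma> \<and> \<gamma> \<le> s1}" using \<open>l2 \<le> s1\<close> by auto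
      thus False using lim_infinite[OF l2(1) \<open>l1 < l2\<close>] l1(3) finite_subset by blast
    next
      assume "l2 < l1"
      have "{\<gamma>. l2 < \<gamma> \<and> \<gamma> < l1} \<subseteq> {\<gamma>. l2 < \<gamma> \<and> \<gamma> \<le> s2}" using l1(2) assms(1) by auto
      thus False using lim_infinite[OF l1(1) \<open>l2 < l1\<close>] l2(3) finite_subset by blast
    qed
  qed
  have eq: "{\<gamma>. l2 < \<gamma> \<and> \<gamma> \<le> s2} = insert s2 {\<gamma>. l1 < \<gamma> \<and> \<gamma> \<le> s1}"
  proof (intro set_eqI iffI)
    fix x assume "x \<in> {\<gamma>. l2 < \<gamma> \<and> \<gamma> \<le> s2}"
    hence x: "l2 < x" "x \<le> s2" by auto
    show "x \<in> insert s2 {\<gamma>. l1 < \<gamma> \<and> \<gamma> \<le> s1}"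
    proof (cases "x = s2")
      case False
      hence "x < s2" using x by simp
      hence "x \<le> s1" using assms(2) by (metis leI)
      thus ?thesis using x \<open>l1 = l2\<close> by simp
    qed simp
  next
    fix x assume "x \<in> insert s2 {\<gamma>. l1 < \<gamma> \<and> \<gamma> \<le> s1}"
    thus "x \<in> {\<gamma>. l2 < \<gamma> \<and> \<gamma> \<le> s2}"
      using \<open>l1 = l2\<close> \<open>l2 < s2\<close> assms(1) by auto
  qed
  have "s2 \<notin> {\<gamma>. l1 < \<gamma> \<and> \<gamma> \<le> s1}" using assms(1) by auto
  hence "card {\<gamma>. l2 < \<gamma> \<and> \<gamma> \<le> s2} = Suc (card {\<gamma>. l1 < \<gamma> \<and> \<gamma> \<le> s1})"
    using eq l1(3) by simp
  thus False using l1(4) l2(4) by simp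
qed




lemma Fclass_subset: "Fclass B \<alpha> A \<Longrightarrow> A \<subseteq> topspace B"
proof (induction rule: Fclass.induct)
  case (zero \<alpha> A) thus ?case by (simp add: closedin_subset)
next
  case (odd_union \<alpha> A) thus ?case by blast
next
  case (even_inter \<alpha> A) thus ?case by blast
next
  case (suslin F) thus ?case using closedin_subset by blast
qed

lemma Fclass_preimage:
  assumes "Fclass B \<alpha> A" "continuous_map C B f"
  shows "Fclass C \<alpha> {x \<in> topspace C. f x \<in> A}"
  using assms(1)
proof (induction rule: Fclass.induct)
  case (zero \<alpha> A)
  thus ?case using closedin_continuous_map_preimage[OF assms(2)] Fclass.zero by blast
next
  case (odd_union \<alpha> A)
  have "{x \<in> topspace C. f x \<in> (\<Union>n. A n)} = (\<Union>n. {x \<in> topspace C. f x \<in> A n})" by auto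
  moreover have "Fclass C \<alpha> (\<Union>n. {x \<in> topspace C. f x \<in> A n})"
    by (rule Fclass.odd_union) (use odd_union in auto)
  ultimately show ?case by simp
next
  case (even_inter \<alpha> A)
  have "{x \<in> topspace C. f x \<in> (\<Inter>n. A n)} = (\<Inter>n. {x \<in> topspace C. f x \<in> A n})" by auto
  moreover have "Fclass C \<alpha> (\<Inter>n. {x \<in> topspace C. f x \<in> A n})"
    by (rule Fclass.even_inter) (use even_inter in auto)
  ultimately show ?case by simp
next
  case (suslin F)
  have "{x \<in> topspace C. f x \<in> (\<Union>\<sigma>::nat \<Rightarrow> nat. \<Inter>k. F (map \<sigma> [0..<Suc k]))}
     = (\<Union>\<sigma>::nat \<Rightarrow> nat. \<Inter>k. {x \<in> topspace C. f x \<in> F (map \<sigma> [0..<Suc k])})" by auto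
  moreover have "Fclass C top (\<Union>\<sigma>::nat \<Rightarrow> nat. \<Inter>k. {x \<in> topspace C. f x \<in> F (map \<sigma> [0..<Suc k])})"
    by (rule Fclass.suslin) (use suslin closedin_continuous_map_preimage[OF assms(2)] in auto)
  ultimately show ?case by simp
qed

lemma Fclass_mono:
  fixes \<alpha> \<beta> :: "'o::{wellorder,order_top}"
  assumes "Fclass B \<beta> A" "\<beta> \<le> \<alpha>" "\<alpha> < top"
  shows "Fclass B \<alpha> A"
proof (cases "\<beta> = \<alpha>")
  case True thus ?thesis using assms by simp
next
  case False
  hence lt: "\<beta> < \<alpha>" using assms by simp
  hence nz: "\<not> (\<forall>\<gamma>. \<alpha> \<le> \<gamma>)" using not_le by blast
  show ?thesis
  proof (cases "ord_odd \<alpha>")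
    case True
    have "Fclass B \<alpha> (\<Union>n::nat. A)"
      by (rule Fclass.odd_union) (use assms nz True lt in auto)
    thus ?thesis by simp
  next
    case False
    have "Fclass B \<alpha> (\<Inter>n::nat. A)"
      by (rule Fclass.even_inter) (use assms nz False lt in auto)
    thus ?thesis by simp
  qed
qed

lemma Fclass_inv_zero:
  fixes \<alpha> :: "'o::{wellorder,order_top}"
  assumes "Fclass B \<alpha> A" "\<forall>\<beta>. \<alpha> \<le> \<beta>" "\<exists>b::'o. b < top"
  shows "closedin B A"
  using assms(1)
proof (cases rule: Fclass.cases)
  case suslin
  hence "\<forall>\<beta>::'o. top \<le> \<beta>" using assms(2) by simp
  thus ?thesis using assms(3) leD by blast
qed (use assms in auto)

lemma Fclass_inv_odd:
  fixes \<alpha> :: "'o::{wellorder,order_top}"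
  assumes "Fclass B \<alpha> A" "\<alpha> < top" "\<not> (\<forall>\<beta>. \<alpha> \<le> \<beta>)" "ord_odd \<alpha>"
  shows "\<exists>An. A = (\<Union>n. An n) \<and> (\<forall>n::nat. \<exists>\<beta><\<alpha>. Fclass B \<beta> (An n))"
  using assms(1)
  by (cases rule: Fclass.cases) (use assms in auto)

lemma Fclass_inv_even:
  fixes \<alpha> :: "'o::{wellorder,order_top}"
  assumes "Fclass B \<alpha> A" "\<alpha> < top" "\<not> (\<forall>\<beta>. \<alpha> \<le> \<beta>)" "\<not> ord_odd \<alpha>"
  shows "\<exists>An. A = (\<Inter>n. An n) \<and> (\<forall>n::nat. \<exists>\<beta><\<alpha>. Fclass B \<beta> (An n))"
  using assms(1)
  by (cases rule: Fclass.cases) (use assms in auto)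

lemma Fclass_inv_top:
  assumes "Fclass B (top::'o::{wellorder,order_top}) A"
  shows "\<exists>F. (\<forall>s. closedin B (F s)) \<and> A = (\<Union>\<sigma>::nat \<Rightarrow> nat. \<Inter>k. F (map \<sigma> [0..<Suc k]))"
  using assms
  by (cases rule: Fclass.cases) auto

lemma UN_Int_UN_decode:
  fixes P Q :: "nat \<Rightarrow> 'a set"
  shows   "(\<Union>n. P n) \<inter> (\<Union>m. Q m) = (\<Union>k. P (fst (prod_decode k)) \<inter> Q (snd (prod_decode k)))"
proof (intro set_eqI iffI)
  fix x assume "x \<in> (\<Union>n. P n) \<inter> (\<Union>m. Q m)"
  then obtain n m where "x \<in> P n" "x \<in> Q m" by auto
  thus "x \<in> (\<Union>k. P (fst (prod_decode k)) \<inter> Q (snd (prod_decode k)))"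
    by (intro UN_I[of "prod_encode (n,m)"]) auto
qed auto

lemma INT_Int_INT_interleave:
  fixes P Q :: "nat \<Rightarrow> 'a set"
  shows   "(\<Inter>n. P n) \<inter> (\<Inter>m. Q m) = (\<Inter>k. if even k then P (k div 2) else Q (k div 2))"
proof (intro set_eqI iffI)
  fix x assume x: "x \<in> (\<Inter>k. if even k then P (k div 2) else Q (k div 2))"
  have "x \<in> P n" for n using x[THEN INT_D, of "2*n"] by simp
  moreover have "x \<in> Q n" for n using x[THEN INT_D, of "2*n+1"] by simp
  ultimately show "x \<in> (\<Inter>n. P n) \<inter> (\<Inter>m. Q m)" by auto
qed auto

lemma Fclass_Int_lt:
  fixes \<alpha> :: "'o::{wellorder,order_top}"
  assumes "\<alpha> < top" "\<exists>b::'o. b < top"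
  shows "Fclass B \<alpha> A \<Longrightarrow> Fclass B \<alpha> A' \<Longrightarrow> Fclass B \<alpha> (A \<inter> A')"
  using assms(1)
proof (induction \<alpha> arbitrary: A A' rule: less_induct)
  case (less \<alpha>)
  show ?case
  proof (cases "\<forall>\<beta>. \<alpha> \<le> \<beta>")
    case True
    thus ?thesis using Fclass_inv_zero[OF less(2) True assms(2)] Fclass_inv_zero[OF less(3) True assms(2)]
      by (intro Fclass.zero) auto
  next
    case nz: False
    show ?thesis
    proof (cases "ord_odd \<alpha>")
      case True
      obtain P where P: "A = (\<Union>n. P n)" "\<forall>n::nat. \<exists>\<beta><\<alpha>. Fclass B \<beta> (P n)"
        using Fclass_inv_odd[OF less(2) less(4) nz True] by blast
      obtain Q where Q: "A' = (\<Union>n. Q n)" "\<forall>n::nat. \<exists>\<beta><\<alpha>. Fclass B \<beta> (Q n)"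
        using Fclass_inv_odd[OF less(3) less(4) nz True] by blast
      have "Fclass B \<alpha> (\<Union>k. P (fst (prod_decode k)) \<inter> Q (snd (prod_decode k)))"
      proof (rule Fclass.odd_union[OF less(4) nz True], rule allI)
        fix k
        obtain b1 where b1: "b1 < \<alpha>" "Fclass B b1 (P (fst (prod_decode k)))" using P by blast
        obtain b2 where b2: "b2 < \<alpha>" "Fclass B b2 (Q (snd (prod_decode k)))" using Q by blast
        have mt: "max b1 b2 < top" "max b1 b2 < \<alpha>" using b1 b2 less(4) by auto
        show "\<exists>\<beta><\<alpha>. Fclass B \<beta> (P (fst (prod_decode k)) \<inter> Q (snd (prod_decode k)))"
          using less(1)[OF mt(2) Fclass_mono[OF b1(2) _ mt(1)] Fclass_mono[OF b2(2) _ mt(1)] mt(1)] mt(2)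
          by (meson max.cobounded1 max.cobounded2)
      qed
      thus ?thesis using P(1) Q(1) UN_Int_UN_decode by metis
    next
      case False
      obtain P where P: "A = (\<Inter>n. P n)" "\<forall>n::nat. \<exists>\<beta><\<alpha>. Fclass B \<beta> (P n)"
        using Fclass_inv_even[OF less(2) less(4) nz False] by blast
      obtain Q where Q: "A' = (\<Inter>n. Q n)" "\<forall>n::nat. \<exists>\<beta><\<alpha>. Fclass B \<beta> (Q n)"
        using Fclass_inv_even[OF less(3) less(4) nz False] by blast
      have "Fclass B \<alpha> (\<Inter>k. if even k then P (k div 2) else Q (k div 2))"
        by (rule Fclass.even_inter[OF less(4) nz False]) (use P Q in auto)
      thus ?thesis using P(1) Q(1) INT_Int_INT_interleave by metis
    qed
  qed
qed




definition evl :: "nat list \<Rightarrow> nat list" where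
  "evl s = map (\<lambda>j. s ! (2*j)) [0..<(length s + 1) div 2]"
definition odl :: "nat list \<Rightarrow> nat list" where
  "odl s = map (\<lambda>j. s ! (2*j+1)) [0..<length s div 2]"

lemma evl_pref: "evl (map \<rho> [0..<Suc k]) = map (\<lambda>j. \<rho> (2*j)) [0..<Suc (k div 2)]"
proof -
  have "(Suc k + 1) div 2 = Suc (k div 2)" by simp
  thus ?thesis unfolding evl_def by (auto intro!: map_cong simp del: upt_Suc)
qed

lemma odl_pref: "odl (map \<rho> [0..<Suc (Suc k)]) = map (\<lambda>j. \<rho> (2*j+1)) [0..<Suc (k div 2)]"
proof -
  have "(Suc (Suc k)) div 2 = Suc (k div 2)" by simp
  thus ?thesis unfolding odl_def by (auto intro!: map_cong simp del: upt_Suc)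
qed

lemma Fclass_Int_top:
  assumes "Fclass B (top::'o::{wellorder,order_top}) A" "Fclass B (top::'o) A'"
  shows "Fclass B (top::'o) (A \<inter> A')"
proof -
  obtain F where F: "\<forall>s. closedin B (F s)" "A = (\<Union>\<sigma>::nat \<Rightarrow> nat. \<Inter>k. F (map \<sigma> [0..<Suc k]))"
    using Fclass_inv_top[OF assms(1)] by blast
  obtain G where G: "\<forall>s. closedin B (G s)" "A' = (\<Union>\<sigma>::nat \<Rightarrow> nat. \<Inter>k. G (map \<sigma> [0..<Suc k]))"
    using Fclass_inv_top[OF assms(2)] by blast
  define H where "H s = F (evl s) \<inter> (if length s < 2 then topspace B else G (odl s))" for s
  have cl: "\<forall>s. closedin B (H s)" unfolding H_def using F(1) G(1) by auto
  have key: "(\<Inter>k. H (map \<rho> [0..<Suc k])) =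
      (\<Inter>k. F (map (\<lambda>j. \<rho> (2*j)) [0..<Suc k])) \<inter> (\<Inter>k. G (map (\<lambda>j. \<rho> (2*j+1)) [0..<Suc k]))" for \<rho>
  proof (intro set_eqI iffI)
    fix x assume x: "x \<in> (\<Inter>k. H (map \<rho> [0..<Suc k]))"
    have "x \<in> F (map (\<lambda>j. \<rho> (2*j)) [0..<Suc m])" for m
      using x[THEN INT_D, of "2*m"] unfolding H_def evl_pref by simp
    moreover have "x \<in> G (map (\<lambda>j. \<rho> (2*j+1)) [0..<Suc m])" for m
    proof -
      have "x \<in> H (map \<rho> [0..<Suc (Suc (2*m))])" using x by blast
      thus ?thesis unfolding H_def odl_pref by (simp del: upt_Suc)
    qed
    ultimately show "x \<in> (\<Inter>k. F (map (\<lambda>j. \<rho> (2*j)) [0..<Suc k])) \<inter> (\<Inter>k. G (map (\<lambda>j. \<rho> (2*j+1)) [0..<Suc k]))"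
      by blast
  next
    fix x assume x: "x \<in> (\<Inter>k. F (map (\<lambda>j. \<rho> (2*j)) [0..<Suc k])) \<inter> (\<Inter>k. G (map (\<lambda>j. \<rho> (2*j+1)) [0..<Suc k]))"
    have xt: "x \<in> topspace B" using x F(1) closedin_subset by blast
    show "x \<in> (\<Inter>k. H (map \<rho> [0..<Suc k]))"
    proof
      fix k :: nat
      show "x \<in> H (map \<rho> [0..<Suc k])"
      proof (cases k)
        case 0
        thus ?thesis using x xt unfolding H_def evl_pref by (simp del: upt_Suc)
      next
        case (Suc k')
        have "x \<in> F (evl (map \<rho> [0..<Suc k]))" using x unfolding evl_pref by simp
        moreover have "x \<in> G (odl (map \<rho> [0..<Suc (Suc k')]))" using x unfolding odl_pref by blast
        ultimately show ?thesis unfolding H_def using Suc by (simp del: upt_Suc)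
      qed
    qed
  qed
  have "A \<inter> A' = (\<Union>\<rho>::nat \<Rightarrow> nat. \<Inter>k. H (map \<rho> [0..<Suc k]))"
  proof (intro set_eqI iffI)
    fix x assume "x \<in> A \<inter> A'"
    then obtain \<sigma> \<tau> where s: "x \<in> (\<Inter>k. F (map \<sigma> [0..<Suc k]))" and t: "x \<in> (\<Inter>k. G (map \<tau> [0..<Suc k]))"
      using F(2) G(2) by blast
    define \<rho> where "\<rho> j = (if even j then \<sigma> (j div 2) else \<tau> (j div 2))" for j
    have "(\<lambda>j. \<rho> (2*j)) = \<sigma>" "(\<lambda>j. \<rho> (2*j+1)) = \<tau>" unfolding \<rho>_def by auto
    hence "x \<in> (\<Inter>k. H (map \<rho> [0..<Suc k]))" using key[of \<rho>] s t by simp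
    thus "x \<in> (\<Union>\<rho>::nat \<Rightarrow> nat. \<Inter>k. H (map \<rho> [0..<Suc k]))" by blast
  next
    fix x assume "x \<in> (\<Union>\<rho>::nat \<Rightarrow> nat. \<Inter>k. H (map \<rho> [0..<Suc k]))"
    then obtain \<rho> where "x \<in> (\<Inter>k. H (map \<rho> [0..<Suc k]))" by blast
    thus "x \<in> A \<inter> A'" unfolding key F(2) G(2) by blast
  qed
  thus ?thesis using Fclass.suslin[OF cl] by simp
qed




lemma gen_subtopology:
  "subtopology (topology_generated_by B) S = topology_generated_by ((\<lambda>b. b \<inter> S) ` B)"
proof (rule topology_eq[THEN iffD2], intro allI iffI)
  fix W assume "openin (subtopology (topology_generated_by B) S) W"
  then obtain W0 where W0: "generate_topology_on B W0" "W = W0 \<inter> S"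
    unfolding openin_subtopology openin_topology_generated_by_iff by blast
  have "generate_topology_on ((\<lambda>b. b \<inter> S) ` B) (W0 \<inter> S)" using W0(1)
  proof (induction rule: generate_topology_on.induct)
    case Empty thus ?case by (simp add: generate_topology_on.Empty)
  next
    case (Int a b)
    have "a \<inter> b \<inter> S = (a \<inter> S) \<inter> (b \<inter> S)" by blast
    thus ?case using Int generate_topology_on.Int by metis
  next
    case (UN K)
    have "\<Union>K \<inter> S = \<Union>((\<lambda>k. k \<inter> S) ` K)" by blast
    moreover have "generate_topology_on ((\<lambda>b. b \<inter> S) ` B) (\<Union>((\<lambda>k. k \<inter> S) ` K))"
      by (rule generate_topology_on.UN) (use UN in blast)
    ultimately show ?case by simp
  next
    case (Basis s) thus ?case by (simp add: generate_topology_on.Basis)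
  qed
  thus "openin (topology_generated_by ((\<lambda>b. b \<inter> S) ` B)) W"
    using W0(2) openin_topology_generated_by_iff by blast
next
  fix W assume "openin (topology_generated_by ((\<lambda>b. b \<inter> S) ` B)) W"
  hence "generate_topology_on ((\<lambda>b. b \<inter> S) ` B) W" by (simp add: openin_topology_generated_by_iff)
  hence "\<exists>W0. generate_topology_on B W0 \<and> W = W0 \<inter> S"
  proof (induction rule: generate_topology_on.induct)
    case Empty thus ?case by (auto intro: generate_topology_on.Empty)
  next
    case (Int a b)
    then obtain Oa Ob where "generate_topology_on B Oa" "a = Oa \<inter> S" "generate_topology_on B Ob" "b = Ob \<inter> S"
      by blast
    thus ?case by (intro exI[of _ "Oa \<inter> Ob"]) (auto intro: generate_topology_on.Int)
  next
    case (UN K)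
    then obtain f where f: "\<And>k. k \<in> K \<Longrightarrow> generate_topology_on B (f k) \<and> k = f k \<inter> S" by metis
    show ?case
      by (intro exI[of _ "\<Union>(f ` K)"]) (use f in \<open>auto intro!: generate_topology_on.UN\<close>)
  next
    case (Basis s) thus ?case by (auto intro: generate_topology_on.Basis)
  qed
  thus "openin (subtopology (topology_generated_by B) S) W"
    unfolding openin_subtopology openin_topology_generated_by_iff by blast
qed

lemma open_disjoint_dense:
  assumes "X closure_of S = topspace X" "openin X T" "S \<inter> T = {}"
  shows "T = {}"
  using assms dense_intersects_open by blast

locale zsetup =
  fixes Y Yt :: "'a topology" and X Xt :: "'a \<Rightarrow> 'a topology"
  assumes t1: "t1_space Yt"
    and Y_sub: "topspace Y \<subseteq> topspace Yt" "Y = subtopology Yt (topspace Y)"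
    and Y_dense: "Yt closure_of (topspace Y) = topspace Yt"
    and X_ne: "\<forall>i \<in> isolated_points Y. topspace (X i) \<noteq> {}"
    and X_sub: "\<forall>i \<in> isolated_points Y. topspace (X i) \<subseteq> topspace (Xt i)
                   \<and> X i = subtopology (Xt i) (topspace (X i))"
    and Xt_disj: "\<forall>i \<in> isolated_points Y. \<forall>j \<in> isolated_points Y.
                   i \<noteq> j \<longrightarrow> topspace (Xt i) \<inter> topspace (Xt j) = {}"
    and Xt_disj_Yt: "\<forall>i \<in> isolated_points Y. topspace (Xt i) \<inter> nonisolated_points Yt = {}"

context zsetup
begin

lemma openY: "openin Y U \<longleftrightarrow> (\<exists>T. openin Yt T \<and> U = T \<inter> topspace Y)"
proof -
  from Y_sub(2) have "openin Y U \<longleftrightarrow> openin (subtopology Yt (topspace Y)) U"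
    by (rule arg_cong[where f="\<lambda>Z. openin Z U"])
  thus ?thesis by (simp add: openin_subtopology)
qed

lemma openX: "i \<in> isolated_points Y \<Longrightarrow> openin (X i) U \<longleftrightarrow> (\<exists>T. openin (Xt i) T \<and> U = T \<inter> topspace (X i))"
proof -
  assume i: "i \<in> isolated_points Y"
  have "X i = subtopology (Xt i) (topspace (X i))" using bspec[OF X_sub i] by (rule conjunct2)
  hence "openin (X i) U \<longleftrightarrow> openin (subtopology (Xt i) (topspace (X i))) U"
    by (rule arg_cong[where f="\<lambda>Z. openin Z U"])
  thus ?thesis by (simp only: openin_subtopology)
qed

lemma I_eq: "isolated_points Yt = isolated_points Y"
proof (intro set_eqI iffI)
  fix y assume "y \<in> isolated_points Yt"
  hence y: "y \<in> topspace Yt" "openin Yt {y}" unfolding isolated_points_def by auto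
  have "topspace Y \<inter> {y} \<noteq> {}"
  proof
    assume "topspace Y \<inter> {y} = {}"
    hence "{y} = {}" by (rule open_disjoint_dense[OF Y_dense y(2)])
    thus False by simp
  qed
  hence yY: "y \<in> topspace Y" by blast
  have "{y} = {y} \<inter> topspace Y" using yY by blast
  hence "openin Y {y}" unfolding openY using y(2) by blast
  thus "y \<in> isolated_points Y" using yY unfolding isolated_points_def by auto
next
  fix y assume "y \<in> isolated_points Y"
  hence y: "y \<in> topspace Y" "openin Y {y}" unfolding isolated_points_def by auto
  obtain U where U: "openin Yt U" "{y} = U \<inter> topspace Y" using openY[THEN iffD1, OF y(2)] by blast
  have yt: "y \<in> topspace Yt" using Y_sub(1) y(1) by (rule subsetD)
  have "closedin Yt {y}" using t1_space_closedin_singleton[THEN iffD1, OF t1] yt by (rule bspec)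
  hence "openin Yt (U - {y})" by (rule openin_diff[OF U(1)])
  moreover have "topspace Y \<inter> (U - {y}) = {}"
  proof -
    have "topspace Y \<inter> (U - {y}) = (U \<inter> topspace Y) - {y}" by blast
    also have "\<dots> = {}" unfolding U(2)[symmetric] by simp
    finally show ?thesis .
  qed
  ultimately have "U - {y} = {}" by (rule open_disjoint_dense[OF Y_dense])
  moreover have "y \<in> U" using U(2) by (metis Int_iff singletonI)
  ultimately have "U = {y}" by blast
  thus "y \<in> isolated_points Yt" using U(1) yt unfolding isolated_points_def by auto
qed

lemma I_sub: "isolated_points Y \<subseteq> topspace Y"
  unfolding isolated_points_def by auto

lemma I_sub_t: "isolated_points Y \<subseteq> topspace Yt"
  using I_sub Y_sub(1) by blast

lemma disj_Yt': "i \<in> isolated_points Y \<Longrightarrow> topspace (Xt i) \<inter> (topspace Yt - isolated_points Y) = {}"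
  using Xt_disj_Yt I_eq unfolding nonisolated_points_def by auto

lemma zoomVt: "zoom_V Yt Xt U = (U - isolated_points Y) \<union> (\<Union>i\<in>U \<inter> isolated_points Y. topspace (Xt i))"
  unfolding zoom_V_def I_eq ..

definition BZt where
  "BZt = {V. \<exists>i \<in> isolated_points Y. openin (Xt i) V} \<union> {zoom_V Yt Xt U | U. openin Yt U}"

lemma Zt_def: "zoom_space Yt Xt = topology_generated_by BZt"
  unfolding zoom_space_def BZt_def I_eq ..

lemma topZt: "topspace (zoom_space Yt Xt) = (topspace Yt - isolated_points Y) \<union> (\<Union>i\<in>isolated_points Y. topspace (Xt i))"
proof -
  have "\<Union>BZt = (topspace Yt - isolated_points Y) \<union> (\<Union>i\<in>isolated_points Y. topspace (Xt i))"
  proof (intro equalityI subsetI)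
    fix x assume "x \<in> \<Union>BZt"
    then obtain V where V: "V \<in> BZt" "x \<in> V" by blast
    thus "x \<in> (topspace Yt - isolated_points Y) \<union> (\<Union>i\<in>isolated_points Y. topspace (Xt i))"
      unfolding BZt_def zoomVt using openin_subset by fastforce
  next
    fix x assume x: "x \<in> (topspace Yt - isolated_points Y) \<union> (\<Union>i\<in>isolated_points Y. topspace (Xt i))"
    have "zoom_V Yt Xt (topspace Yt) \<in> BZt" unfolding BZt_def by blast
    moreover have "x \<in> zoom_V Yt Xt (topspace Yt)" using x I_sub_t unfolding zoomVt by blast
    ultimately show "x \<in> \<Union>BZt" by blast
  qed
  thus ?thesis unfolding Zt_def by simp
qed

lemma open_piece: "i \<in> isolated_points Y \<Longrightarrow> openin (Xt i) V \<Longrightarrow> openin (zoom_space Yt Xt) V"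
  unfolding Zt_def by (rule topology_generated_by_Basis) (auto simp: BZt_def)

lemma open_V: "openin Yt U \<Longrightarrow> openin (zoom_space Yt Xt) (zoom_V Yt Xt U)"
  unfolding Zt_def by (rule topology_generated_by_Basis) (auto simp: BZt_def)

lemma closed_combo:
  assumes "\<forall>i \<in> isolated_points Y. closedin (Xt i) (C i)"
  shows "closedin (zoom_space Yt Xt) ((topspace Yt - isolated_points Y) \<union> (\<Union>i\<in>isolated_points Y. C i))"
proof -
  let ?I = "isolated_points Y"
  have sub: "C i \<subseteq> topspace (Xt i)" if "i \<in> ?I" for i using assms that closedin_subset by blast
  have eq: "topspace (zoom_space Yt Xt) - ((topspace Yt - ?I) \<union> (\<Union>i\<in>?I. C i))
      = (\<Union>i\<in>?I. topspace (Xt i) - C i)"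
  proof (intro equalityI subsetI)
    fix x assume "x \<in> topspace (zoom_space Yt Xt) - ((topspace Yt - ?I) \<union> (\<Union>i\<in>?I. C i))"
    then obtain i where i: "i \<in> ?I" "x \<in> topspace (Xt i)" "\<forall>j\<in>?I. x \<notin> C j" unfolding topZt by blast
    thus "x \<in> (\<Union>i\<in>?I. topspace (Xt i) - C i)" by blast
  next
    fix x assume "x \<in> (\<Union>i\<in>?I. topspace (Xt i) - C i)"
    then obtain i where i: "i \<in> ?I" "x \<in> topspace (Xt i)" "x \<notin> C i" by blast
    have "x \<notin> C j" if "j \<in> ?I" for j
    proof (cases "j = i")
      case False thus ?thesis using Xt_disj i sub[OF that] that by blast
    qed (use i in simp)
    moreover have "x \<notin> topspace Yt - ?I" using disj_Yt'[OF i(1)] i by blast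
    ultimately show "x \<in> topspace (zoom_space Yt Xt) - ((topspace Yt - ?I) \<union> (\<Union>i\<in>?I. C i))"
      unfolding topZt using i by blast
  qed
  have "openin (zoom_space Yt Xt) (\<Union>i\<in>?I. topspace (Xt i) - C i)"
  proof (intro openin_Union, clarify)
    fix i assume i: "i \<in> ?I"
    have "openin (Xt i) (topspace (Xt i) - C i)" using assms i by (simp add: openin_diff)
    thus "openin (zoom_space Yt Xt) (topspace (Xt i) - C i)" using open_piece i by blast
  qed
  moreover have "(topspace Yt - ?I) \<union> (\<Union>i\<in>?I. C i) \<subseteq> topspace (zoom_space Yt Xt)"
    unfolding topZt using sub by blast
  ultimately show ?thesis unfolding closedin_def eq by simp
qed

end



context zsetup
begin

lemma Xsub: "i \<in> isolated_points Y \<Longrightarrow> topspace (X i) \<subseteq> topspace (Xt i)"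
  using bspec[OF X_sub] by (rule conjunct1)

lemma Xtdisj: "i \<in> isolated_points Y \<Longrightarrow> j \<in> isolated_points Y \<Longrightarrow> i \<noteq> j \<Longrightarrow> x \<in> topspace (Xt i) \<Longrightarrow> x \<notin> topspace (Xt j)"
  using Xt_disj by blast

lemma XtYt: "i \<in> isolated_points Y \<Longrightarrow> x \<in> topspace (Xt i) \<Longrightarrow> x \<notin> topspace Yt - isolated_points Y"
  using disj_Yt' by blast

definition SY where "SY = (topspace Y - isolated_points Y) \<union> (\<Union>i\<in>isolated_points Y. topspace (X i))"

lemma Xt_SY: "i \<in> isolated_points Y \<Longrightarrow> topspace (Xt i) \<inter> SY = topspace (X i)"
proof (intro equalityI subsetI)
  fix x assume i: "i \<in> isolated_points Y" and x: "x \<in> topspace (Xt i) \<inter> SY"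
  have "x \<notin> topspace Y - isolated_points Y" using XtYt[OF i] x Y_sub(1) by blast
  then obtain j where j: "j \<in> isolated_points Y" "x \<in> topspace (X j)" using x unfolding SY_def by blast
  have "j = i" using Xtdisj[OF i j(1) _ ] x j Xsub[OF j(1)] by blast
  thus "x \<in> topspace (X i)" using j by simp
next
  fix x assume i: "i \<in> isolated_points Y" and x: "x \<in> topspace (X i)"
  thus "x \<in> topspace (Xt i) \<inter> SY" using Xsub[OF i] unfolding SY_def by blast
qed

lemma V_SY:
  assumes "U \<subseteq> topspace Yt"
  shows "zoom_V Yt Xt U \<inter> SY = zoom_V Y X (U \<inter> topspace Y)"
proof (intro equalityI subsetI)
  fix x assume x: "x \<in> zoom_V Yt Xt U \<inter> SY"
  show "x \<in> zoom_V Y X (U \<inter> topspace Y)"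
  proof (cases "x \<in> U - isolated_points Y")
    case True
    have xt: "x \<in> topspace Yt - isolated_points Y" using True assms by blast
    have "x \<notin> topspace (X j)" if j: "j \<in> isolated_points Y" for j
    proof
      assume "x \<in> topspace (X j)"
      hence "x \<in> topspace (Xt j)" using Xsub[OF j] by (rule set_rev_mp)
      hence "x \<notin> topspace Yt - isolated_points Y" by (rule XtYt[OF j])
      thus False using xt by contradiction
    qed
    hence "x \<in> topspace Y" using x unfolding SY_def by blast
    thus ?thesis using True unfolding zoom_V_def by blast
  next
    case False
    then obtain i where i: "i \<in> U" "i \<in> isolated_points Y" "x \<in> topspace (Xt i)"
      using x unfolding zoomVt by blast
    have "x \<in> topspace (Xt i) \<inter> SY" using i(3) x by blast
    hence "x \<in> topspace (X i)" unfolding Xt_SY[OF i(2)] .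
    moreover have "i \<in> U \<inter> topspace Y \<inter> isolated_points Y" using i I_sub by blast
    ultimately show ?thesis unfolding zoom_V_def by blast
  qed
next
  fix x assume x: "x \<in> zoom_V Y X (U \<inter> topspace Y)"
  show "x \<in> zoom_V Yt Xt U \<inter> SY"
  proof (cases "x \<in> U \<inter> topspace Y - isolated_points Y")
    case True thus ?thesis unfolding zoomVt SY_def by blast
  next
    case False
    then obtain i where i: "i \<in> U \<inter> topspace Y \<inter> isolated_points Y" "x \<in> topspace (X i)"
      using x unfolding zoom_V_def by blast
    have "x \<in> topspace (Xt i)" using Xsub i by blast
    thus ?thesis using i unfolding zoomVt SY_def by blast
  qed
qed

definition BZ where
  "BZ = {V. \<exists>i \<in> isolated_points Y. openin (X i) V} \<union> {zoom_V Y X U | U. openin Y U}"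

lemma BZ_eq: "BZ = (\<lambda>b. b \<inter> SY) ` BZt"
proof (intro equalityI subsetI)
  fix V assume "V \<in> BZ"
  hence "(\<exists>i \<in> isolated_points Y. openin (X i) V) \<or> (\<exists>U. V = zoom_V Y X U \<and> openin Y U)"
    unfolding BZ_def by blast
  thus "V \<in> (\<lambda>b. b \<inter> SY) ` BZt"
  proof
    assume "\<exists>i \<in> isolated_points Y. openin (X i) V"
    then obtain i where i: "i \<in> isolated_points Y" "openin (X i) V" by blast
    then obtain T where T: "openin (Xt i) T" "V = T \<inter> topspace (X i)" using openX by blast
    have "T \<inter> SY = T \<inter> topspace (X i)" using Xt_SY[OF i(1)] openin_subset[OF T(1)] by blast
    moreover have "T \<in> BZt" unfolding BZt_def using i T by blast
    ultimately show ?thesis using T(2) by (metis image_eqI)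
  next
    assume "\<exists>U. V = zoom_V Y X U \<and> openin Y U"
    then obtain U where U: "V = zoom_V Y X U" "openin Y U" by blast
    then obtain T where T: "openin Yt T" "U = T \<inter> topspace Y" using openY by blast
    have "zoom_V Yt Xt T \<inter> SY = V" using V_SY[OF openin_subset[OF T(1)]] U T by simp
    moreover have "zoom_V Yt Xt T \<in> BZt" unfolding BZt_def using T by blast
    ultimately show ?thesis by (metis image_eqI)
  qed
next
  fix W assume "W \<in> (\<lambda>b. b \<inter> SY) ` BZt"
  then obtain b where b: "b \<in> BZt" "W = b \<inter> SY" by blast
  hence "(\<exists>i \<in> isolated_points Y. openin (Xt i) b) \<or> (\<exists>U. b = zoom_V Yt Xt U \<and> openin Yt U)"
    unfolding BZt_def by blast
  thus "W \<in> BZ"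
  proof
    assume "\<exists>i \<in> isolated_points Y. openin (Xt i) b"
    then obtain i where i: "i \<in> isolated_points Y" "openin (Xt i) b" by blast
    have "W = b \<inter> topspace (X i)" using b(2) Xt_SY[OF i(1)] openin_subset[OF i(2)] by blast
    hence "openin (X i) W" using openX[OF i(1)] i(2) by blast
    thus ?thesis unfolding BZ_def using i(1) by blast
  next
    assume "\<exists>U. b = zoom_V Yt Xt U \<and> openin Yt U"
    then obtain U where U: "b = zoom_V Yt Xt U" "openin Yt U" by blast
    have "W = zoom_V Y X (U \<inter> topspace Y)" using b(2) U V_SY[OF openin_subset[OF U(2)]] by simp
    moreover have "openin Y (U \<inter> topspace Y)" using openY U(2) by blast
    ultimately show ?thesis unfolding BZ_def by blast
  qed
qed

lemma Z_def': "zoom_space Y X = topology_generated_by BZ"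
  unfolding zoom_space_def BZ_def ..

lemma SY_sub: "SY \<subseteq> topspace (zoom_space Yt Xt)"
  unfolding topZt SY_def using Xsub Y_sub(1) by blast

lemma Z_sub: "zoom_space Y X = subtopology (zoom_space Yt Xt) SY"
  unfolding Z_def' BZ_eq Zt_def gen_subtopology ..

lemma topZ: "topspace (zoom_space Y X) = SY"
proof -
  have "topspace (zoom_space Y X) = topspace (zoom_space Yt Xt) \<inter> SY"
    by (subst Z_sub) simp
  thus ?thesis using SY_sub by blast
qed

end



context zsetup
begin

definition pt where "pt i = (SOME x. x \<in> topspace (X i))"

lemma pt_in: "i \<in> isolated_points Y \<Longrightarrow> pt i \<in> topspace (X i)"
  unfolding pt_def using X_ne by (simp add: some_in_eq)

definition emb where "emb y = (if y \<in> isolated_points Y then pt y else y)"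

lemma openZt_iff: "openin (zoom_space Yt Xt) U \<longleftrightarrow> generate_topology_on BZt U"
  unfolding Zt_def by (rule openin_topology_generated_by_iff)

lemma emb_cont: "continuous_map Yt (zoom_space Yt Xt) emb"
  unfolding Zt_def
proof (rule continuous_on_generated_topo)
  show "emb ` topspace Yt \<subseteq> \<Union>BZt"
  proof
    fix z assume "z \<in> emb ` topspace Yt"
    then obtain y where y: "y \<in> topspace Yt" "z = emb y" by blast
    have "z \<in> (topspace Yt - isolated_points Y) \<union> (\<Union>i\<in>isolated_points Y. topspace (Xt i))"
    proof (cases "y \<in> isolated_points Y")
      case True
      hence "z \<in> topspace (Xt y)" using y pt_in[OF True] Xsub[OF True] unfolding emb_def by auto
      thus ?thesis using True by blast
    next
      case False thus ?thesis using y unfolding emb_def by simp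
    qed
    thus "z \<in> \<Union>BZt" using topZt unfolding Zt_def by simp
  qed
next
  fix V assume "V \<in> BZt"
  hence "(\<exists>i \<in> isolated_points Y. openin (Xt i) V) \<or> (\<exists>U. V = zoom_V Yt Xt U \<and> openin Yt U)"
    unfolding BZt_def by blast
  thus "openin Yt (emb -` V \<inter> topspace Yt)"
  proof
    assume "\<exists>i \<in> isolated_points Y. openin (Xt i) V"
    then obtain i where i: "i \<in> isolated_points Y" "openin (Xt i) V" by blast
    have "emb -` V \<inter> topspace Yt \<subseteq> {i}"
    proof
      fix y assume y: "y \<in> emb -` V \<inter> topspace Yt"
      hence ev: "emb y \<in> topspace (Xt i)" using openin_subset[OF i(2)] by blast
      show "y \<in> {i}"
      proof (cases "y \<in> isolated_points Y")
        case True
        hence "emb y \<in> topspace (Xt y)" using pt_in[OF True] Xsub[OF True] unfolding emb_def by auto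
        hence "y = i" using Xtdisj[OF True i(1)] ev by blast
        thus ?thesis by simp
      next
        case False
        hence "emb y \<in> topspace Yt - isolated_points Y" using y unfolding emb_def by simp
        thus ?thesis using XtYt[OF i(1) ev] by contradiction
      qed
    qed
    hence "emb -` V \<inter> topspace Yt = {} \<or> emb -` V \<inter> topspace Yt = {i}" by blast
    moreover have "openin Yt {i}" using i(1) I_eq unfolding isolated_points_def by blast
    ultimately show ?thesis by auto
  next
    assume "\<exists>U. V = zoom_V Yt Xt U \<and> openin Yt U"
    then obtain U where U: "V = zoom_V Yt Xt U" "openin Yt U" by blast
    have Ut: "U \<subseteq> topspace Yt" using openin_subset[OF U(2)] .
    have "emb -` V \<inter> topspace Yt = U"
    proof (intro equalityI subsetI)
      fix y assume y: "y \<in> emb -` V \<inter> topspace Yt"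
      show "y \<in> U"
      proof (cases "y \<in> isolated_points Y")
        case True
        hence ey: "emb y \<in> topspace (Xt y)" using pt_in[OF True] Xsub[OF True] unfolding emb_def by auto
        have "emb y \<in> zoom_V Yt Xt U" using y U(1) by blast
        hence "emb y \<in> U - isolated_points Y \<or> (\<exists>j \<in> U \<inter> isolated_points Y. emb y \<in> topspace (Xt j))"
          unfolding zoomVt by blast
        thus ?thesis
        proof
          assume "emb y \<in> U - isolated_points Y"
          hence "emb y \<in> topspace Yt - isolated_points Y" using Ut by blast
          thus ?thesis using XtYt[OF True ey] by contradiction
        next
          assume "\<exists>j \<in> U \<inter> isolated_points Y. emb y \<in> topspace (Xt j)"
          then obtain j where j: "j \<in> U" "j \<in> isolated_points Y" "emb y \<in> topspace (Xt j)" by blast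
          have "j = y" using Xtdisj[OF j(2) True] j(3) ey by blast
          thus ?thesis using j by simp
        qed
      next
        case False
        hence "emb y = y" unfolding emb_def by simp
        hence "y \<in> zoom_V Yt Xt U" using y U(1) by simp
        hence "y \<in> U - isolated_points Y \<or> (\<exists>j \<in> U \<inter> isolated_points Y. y \<in> topspace (Xt j))"
          unfolding zoomVt by blast
        thus ?thesis
        proof
          assume "\<exists>j \<in> U \<inter> isolated_points Y. y \<in> topspace (Xt j)"
          then obtain j where j: "j \<in> isolated_points Y" "y \<in> topspace (Xt j)" by blast
          have "y \<in> topspace Yt - isolated_points Y" using y False by blast
          thus ?thesis using XtYt[OF j] by contradiction
        qed blast
      qed
    next
      fix y assume y: "y \<in> U"
      have "emb y \<in> zoom_V Yt Xt U"
      proof (cases "y \<in> isolated_points Y")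
        case True
        hence ey: "emb y \<in> topspace (Xt y)" using pt_in[OF True] Xsub[OF True] unfolding emb_def by auto
        thus ?thesis using y True unfolding zoomVt by blast
      next
        case False thus ?thesis using y unfolding zoomVt emb_def by simp
      qed
      thus "y \<in> emb -` V \<inter> topspace Yt" using y Ut U(1) by blast
    qed
    thus ?thesis using U(2) by simp
  qed
qed

lemma emb_pre: "{y \<in> topspace Yt. emb y \<in> SY} = topspace Y"
proof (intro equalityI subsetI)
  fix y assume y: "y \<in> {y \<in> topspace Yt. emb y \<in> SY}"
  show "y \<in> topspace Y"
  proof (cases "y \<in> isolated_points Y")
    case True thus ?thesis using I_sub by blast
  next
    case False
    hence e: "emb y = y" unfolding emb_def by simp
    have yt: "y \<in> topspace Yt - isolated_points Y" using y False by blast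
    have "y \<notin> topspace (X j)" if j: "j \<in> isolated_points Y" for j
    proof
      assume "y \<in> topspace (X j)"
      hence "y \<in> topspace (Xt j)" using Xsub[OF j] by (rule set_rev_mp)
      hence "y \<notin> topspace Yt - isolated_points Y" by (rule XtYt[OF j])
      thus False using yt by contradiction
    qed
    moreover have "y \<in> SY" using y e by simp
    ultimately show ?thesis unfolding SY_def by blast
  qed
next
  fix y assume y: "y \<in> topspace Y"
  have "emb y \<in> SY"
  proof (cases "y \<in> isolated_points Y")
    case True thus ?thesis using pt_in[OF True] unfolding emb_def SY_def by auto
  next
    case False thus ?thesis using y unfolding emb_def SY_def by auto
  qed
  thus "y \<in> {y \<in> topspace Yt. emb y \<in> SY}" using y Y_sub(1) by blast
qed

lemma incl_cont: "i \<in> isolated_points Y \<Longrightarrow> continuous_map (Xt i) (zoom_space Yt Xt) id"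
  unfolding Zt_def
proof (rule continuous_on_generated_topo)
  assume i: "i \<in> isolated_points Y"
  show "id ` topspace (Xt i) \<subseteq> \<Union>BZt"
    using i topZt unfolding Zt_def by auto
  fix V assume "V \<in> BZt"
  hence "(\<exists>j \<in> isolated_points Y. openin (Xt j) V) \<or> (\<exists>U. V = zoom_V Yt Xt U \<and> openin Yt U)"
    unfolding BZt_def by blast
  thus "openin (Xt i) (id -` V \<inter> topspace (Xt i))"
  proof
    assume "\<exists>j \<in> isolated_points Y. openin (Xt j) V"
    then obtain j where j: "j \<in> isolated_points Y" "openin (Xt j) V" by blast
    show ?thesis
    proof (cases "j = i")
      case True
      hence "id -` V \<inter> topspace (Xt i) = V" using openin_subset[OF j(2)] by auto
      thus ?thesis using j True by simp
    next
      case False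
      have "id -` V \<inter> topspace (Xt i) = {}"
        using Xtdisj[OF j(1) i False] openin_subset[OF j(2)] by auto
      thus ?thesis by simp
    qed
  next
    assume "\<exists>U. V = zoom_V Yt Xt U \<and> openin Yt U"
    then obtain U where U: "V = zoom_V Yt Xt U" "openin Yt U" by blast
    have Ut: "U \<subseteq> topspace Yt" using openin_subset[OF U(2)] .
    show ?thesis
    proof (cases "i \<in> U")
      case True
      have "id -` V \<inter> topspace (Xt i) = topspace (Xt i)" using True i unfolding U(1) zoomVt by auto
      thus ?thesis by simp
    next
      case False
      have "id -` V \<inter> topspace (Xt i) = {}"
      proof (intro equalityI subsetI)
        fix x assume x: "x \<in> id -` V \<inter> topspace (Xt i)"
        hence "x \<in> U - isolated_points Y \<or> (\<exists>j \<in> U \<inter> isolated_points Y. x \<in> topspace (Xt j))"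
          unfolding U(1) zoomVt by auto
        thus "x \<in> {}"
        proof
          assume "x \<in> U - isolated_points Y"
          hence "x \<in> topspace Yt - isolated_points Y" using Ut by blast
          thus ?thesis using XtYt[OF i] x by blast
        next
          assume "\<exists>j \<in> U \<inter> isolated_points Y. x \<in> topspace (Xt j)"
          then obtain j where j: "j \<in> U" "j \<in> isolated_points Y" "x \<in> topspace (Xt j)" by blast
          have "j \<noteq> i" using j False by blast
          thus ?thesis using Xtdisj[OF j(2) i] j x by blast
        qed
      qed simp
      thus ?thesis by simp
    qed
  qed
qed

lemma incl_pre: "i \<in> isolated_points Y \<Longrightarrow> {x \<in> topspace (Xt i). id x \<in> SY} = topspace (X i)"
  using Xt_SY by auto

end



definition nxt :: "'o::wellorder \<Rightarrow> 'o" where "nxt x = (LEAST y. x < y)"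

lemma nxt_props:
  fixes x y :: "'o::wellorder"
  assumes "x < y"
  shows "x < nxt x" "nxt x \<le> y" "\<forall>z. \<not> (x < z \<and> z < nxt x)"
proof -
  show "x < nxt x" unfolding nxt_def using assms by (rule LeastI)
  show "nxt x \<le> y" unfolding nxt_def using assms by (rule Least_le)
  show "\<forall>z. \<not> (x < z \<and> z < nxt x)" unfolding nxt_def using not_less_Least by blast
qed

definition bot0 :: "'o::wellorder" where "bot0 = (LEAST x. True)"

lemma bot0_le: "bot0 \<le> (x::'o::wellorder)"
  unfolding bot0_def by (rule Least_le) simp

lemma Fclass_topspace: "Fclass B (bot0::'o::{wellorder,order_top}) (topspace B)"
  by (rule Fclass.zero) (auto simp: bot0_le)

lemma ord_nontriv:
  assumes "omega1_plus_one_type TYPE('o::{wellorder,order_top})"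
  shows "\<exists>b::'o. b < top"
proof -
  have "\<not> countable {\<alpha>::'o. \<alpha> < top}" using assms unfolding omega1_plus_one_type_def by blast
  hence "{\<alpha>::'o. \<alpha> < top} \<noteq> {}" by (metis countable_empty)
  thus ?thesis by blast
qed

lemma ord_cnt:
  assumes "omega1_plus_one_type TYPE('o::{wellorder,order_top})" "(\<alpha>::'o) < top"
  shows "countable {\<beta>. \<beta> < \<alpha>}"
  using assms unfolding omega1_plus_one_type_def by blast

context zsetup
begin

definition gmap where
  "gmap z = (if \<exists>i\<in>isolated_points Y. z \<in> topspace (Xt i)
             then (THE i. i \<in> isolated_points Y \<and> z \<in> topspace (Xt i)) else z)"

lemma gmap_piece: "i \<in> isolated_points Y \<Longrightarrow> z \<in> topspace (Xt i) \<Longrightarrow> gmap z = i"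
proof -
  assume i: "i \<in> isolated_points Y" and z: "z \<in> topspace (Xt i)"
  have "(THE j. j \<in> isolated_points Y \<and> z \<in> topspace (Xt j)) = i"
  proof (rule the_equality)
    show "i \<in> isolated_points Y \<and> z \<in> topspace (Xt i)" using i z by blast
    fix j assume "j \<in> isolated_points Y \<and> z \<in> topspace (Xt j)"
    thus "j = i" using Xtdisj[OF i] z by blast
  qed
  thus ?thesis unfolding gmap_def using i z by auto
qed

lemma gmap_else: "\<forall>i\<in>isolated_points Y. z \<notin> topspace (Xt i) \<Longrightarrow> gmap z = z"
  unfolding gmap_def by auto

lemma gmap_pre: "U \<subseteq> topspace Yt \<Longrightarrow> {z \<in> topspace (zoom_space Yt Xt). gmap z \<in> U} = zoom_V Yt Xt U"
proof (intro equalityI subsetI)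
  fix z assume U: "U \<subseteq> topspace Yt" and z: "z \<in> {z \<in> topspace (zoom_space Yt Xt). gmap z \<in> U}"
  show "z \<in> zoom_V Yt Xt U"
  proof (cases "\<exists>i\<in>isolated_points Y. z \<in> topspace (Xt i)")
    case True
    then obtain i where i: "i \<in> isolated_points Y" "z \<in> topspace (Xt i)" by blast
    have "i \<in> U" using z gmap_piece[OF i] by simp
    thus ?thesis using i unfolding zoomVt by blast
  next
    case False
    hence "gmap z = z" by (intro gmap_else) blast
    moreover have "z \<in> topspace Yt - isolated_points Y" using z False unfolding topZt by blast
    ultimately show ?thesis using z unfolding zoomVt by auto
  qed
next
  fix z assume U: "U \<subseteq> topspace Yt" and z: "z \<in> zoom_V Yt Xt U"
  have zt: "z \<in> topspace (zoom_space Yt Xt)" using z U unfolding zoomVt topZt by blast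
  have "gmap z \<in> U"
  proof (cases "z \<in> U - isolated_points Y")
    case True
    have "\<forall>i\<in>isolated_points Y. z \<notin> topspace (Xt i)"
    proof (intro ballI notI)
      fix i assume i: "i \<in> isolated_points Y" "z \<in> topspace (Xt i)"
      have "z \<in> topspace Yt - isolated_points Y" using True U by blast
      thus False using XtYt[OF i] by contradiction
    qed
    hence "gmap z = z" by (rule gmap_else)
    thus ?thesis using True by simp
  next
    case False
    then obtain i where i: "i \<in> U" "i \<in> isolated_points Y" "z \<in> topspace (Xt i)"
      using z unfolding zoomVt by blast
    thus ?thesis using gmap_piece[OF i(2,3)] by simp
  qed
  thus "z \<in> {z \<in> topspace (zoom_space Yt Xt). gmap z \<in> U}" using zt by blast
qed

lemma gmap_cont: "continuous_map (zoom_space Yt Xt) Yt gmap"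
  unfolding continuous_map_def
proof (intro conjI allI impI)
  show "gmap \<in> topspace (zoom_space Yt Xt) \<rightarrow> topspace Yt"
  proof
    fix z assume "z \<in> topspace (zoom_space Yt Xt)"
    hence "z \<in> topspace Yt - isolated_points Y \<or> (\<exists>i\<in>isolated_points Y. z \<in> topspace (Xt i))"
      unfolding topZt by blast
    thus "gmap z \<in> topspace Yt"
    proof
      assume z: "z \<in> topspace Yt - isolated_points Y"
      have "\<forall>i\<in>isolated_points Y. z \<notin> topspace (Xt i)"
        using XtYt z by blast
      thus ?thesis using gmap_else z by simp
    next
      assume "\<exists>i\<in>isolated_points Y. z \<in> topspace (Xt i)"
      then obtain i where i: "i \<in> isolated_points Y" "z \<in> topspace (Xt i)" by blast
      thus ?thesis using gmap_piece[OF i] I_sub_t by auto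
    qed
  qed
  fix U assume "openin Yt U"
  thus "openin (zoom_space Yt Xt) {x \<in> topspace (zoom_space Yt Xt). gmap x \<in> U}"
    using gmap_pre[OF openin_subset] open_V by simp
qed

definition TT where "TT = (topspace Yt - isolated_points Y) \<union> (\<Union>i\<in>isolated_points Y. topspace (X i))"

lemma SY_split: "SY = {z \<in> topspace (zoom_space Yt Xt). gmap z \<in> topspace Y} \<inter> TT"
proof (intro equalityI subsetI)
  fix z assume z: "z \<in> SY"
  have zt: "z \<in> topspace (zoom_space Yt Xt)" using z SY_sub by blast
  show "z \<in> {z \<in> topspace (zoom_space Yt Xt). gmap z \<in> topspace Y} \<inter> TT"
  proof (cases "z \<in> topspace Y - isolated_points Y")
    case True
    have zz: "z \<in> topspace Yt - isolated_points Y" using True Y_sub(1) by blast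
    have "\<forall>i\<in>isolated_points Y. z \<notin> topspace (Xt i)" using XtYt zz by blast
    hence "gmap z = z" by (rule gmap_else)
    thus ?thesis using zt True zz unfolding TT_def by auto
  next
    case False
    then obtain i where i: "i \<in> isolated_points Y" "z \<in> topspace (X i)" using z unfolding SY_def by blast
    have "gmap z = i" using gmap_piece[OF i(1)] Xsub[OF i(1)] i(2) by blast
    thus ?thesis using zt i I_sub unfolding TT_def by auto
  qed
next
  fix z assume z: "z \<in> {z \<in> topspace (zoom_space Yt Xt). gmap z \<in> topspace Y} \<inter> TT"
  show "z \<in> SY"
  proof (cases "z \<in> topspace Yt - isolated_points Y")
    case True
    have "\<forall>i\<in>isolated_points Y. z \<notin> topspace (Xt i)" using XtYt True by blast
    hence "gmap z = z" by (rule gmap_else)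
    hence "z \<in> topspace Y" using z by simp
    thus ?thesis using True unfolding SY_def by blast
  next
    case False
    thus ?thesis using z unfolding TT_def SY_def by blast
  qed
qed

lemma INT_combo:
  assumes "\<forall>i\<in>isolated_points Y. \<forall>n. B i n \<subseteq> topspace (Xt i)"
  shows "(topspace Yt - isolated_points Y) \<union> (\<Union>i\<in>isolated_points Y. \<Inter>n::nat. B i n)
       = (\<Inter>n. (topspace Yt - isolated_points Y) \<union> (\<Union>i\<in>isolated_points Y. B i n))"
proof (intro equalityI subsetI)
  fix z assume z: "z \<in> (\<Inter>n. (topspace Yt - isolated_points Y) \<union> (\<Union>i\<in>isolated_points Y. B i n))"
  show "z \<in> (topspace Yt - isolated_points Y) \<union> (\<Union>i\<in>isolated_points Y. \<Inter>n::nat. B i n)"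
  proof (cases "z \<in> topspace Yt - isolated_points Y")
    case False
    obtain i0 where i0: "i0 \<in> isolated_points Y" "z \<in> B i0 0" using z False by blast
    have "z \<in> B i0 n" for n
    proof -
      obtain j where j: "j \<in> isolated_points Y" "z \<in> B j n" using z False by blast
      have "z \<in> topspace (Xt j)" "z \<in> topspace (Xt i0)" using assms j i0 by blast+
      hence "j = i0" using Xtdisj[OF j(1) i0(1)] by blast
      thus ?thesis using j by simp
    qed
    thus ?thesis using i0 by blast
  qed blast
qed blast

end



context zsetup
begin

lemma Tlem_top:
  assumes "\<forall>i\<in>isolated_points Y. Fclass (Xt i) (top::'o::{wellorder,order_top}) (A i)"
  shows "Fclass (zoom_space Yt Xt) (top::'o) ((topspace Yt - isolated_points Y) \<union> (\<Union>i\<in>isolated_points Y. A i))"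
proof -
  let ?I = "isolated_points Y" and ?Y' = "topspace Yt - isolated_points Y"
  have "\<forall>i\<in>?I. \<exists>G. (\<forall>s. closedin (Xt i) (G s)) \<and> A i = (\<Union>\<sigma>::nat \<Rightarrow> nat. \<Inter>k. G (map \<sigma> [0..<Suc k]))"
    using assms Fclass_inv_top by blast
  then obtain G where G: "\<forall>i\<in>?I. (\<forall>s. closedin (Xt i) (G i s)) \<and> A i = (\<Union>\<sigma>::nat \<Rightarrow> nat. \<Inter>k. G i (map \<sigma> [0..<Suc k]))"
    by metis
  define H where "H s = ?Y' \<union> (\<Union>i\<in>?I. G i s)" for s
  have cl: "\<forall>s. closedin (zoom_space Yt Xt) (H s)"
    unfolding H_def using G by (intro allI closed_combo) blast
  have sub: "\<forall>i\<in>?I. \<forall>k. G i (map \<sigma> [0..<Suc k]) \<subseteq> topspace (Xt i)" for \<sigma>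
    using G closedin_subset by blast
  have key: "(\<Inter>k. H (map \<sigma> [0..<Suc k])) = ?Y' \<union> (\<Union>i\<in>?I. \<Inter>k. G i (map \<sigma> [0..<Suc k]))" for \<sigma>
    unfolding H_def using INT_combo[OF sub[of \<sigma>]] by simp
  have "(\<Union>\<sigma>::nat \<Rightarrow> nat. \<Inter>k. H (map \<sigma> [0..<Suc k])) = ?Y' \<union> (\<Union>i\<in>?I. A i)"
  proof -
    have "(\<Union>\<sigma>::nat \<Rightarrow> nat. \<Inter>k. H (map \<sigma> [0..<Suc k]))
        = (\<Union>\<sigma>::nat \<Rightarrow> nat. ?Y' \<union> (\<Union>i\<in>?I. \<Inter>k. G i (map \<sigma> [0..<Suc k])))" using key by simp
    also have "\<dots> = ?Y' \<union> (\<Union>i\<in>?I. \<Union>\<sigma>::nat \<Rightarrow> nat. \<Inter>k. G i (map \<sigma> [0..<Suc k]))" by blast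
    also have "\<dots> = ?Y' \<union> (\<Union>i\<in>?I. A i)" using G by simp
    finally show ?thesis .
  qed
  thus ?thesis using Fclass.suslin[OF cl] by simp
qed

lemma Tlem:
  fixes \<alpha> :: "'o::{wellorder,order_top}"
  assumes ord: "omega1_plus_one_type TYPE('o)"
  shows "\<alpha> < top \<Longrightarrow> \<forall>i\<in>isolated_points Y. Fclass (Xt i) \<alpha> (A i) \<Longrightarrow>
     Fclass (zoom_space Yt Xt) \<alpha> ((topspace Yt - isolated_points Y) \<union> (\<Union>i\<in>isolated_points Y. A i))"
proof (induction \<alpha> arbitrary: A rule: less_induct)
  case (less \<alpha>)
  let ?I = "isolated_points Y" and ?Y' = "topspace Yt - isolated_points Y" and ?Z = "zoom_space Yt Xt"
  have nontriv: "\<exists>b::'o. b < top" using ord_nontriv[OF ord] .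
  have Asub: "\<forall>i\<in>?I. A i \<subseteq> topspace (Xt i)" using less(3) Fclass_subset by blast
  show ?case
  proof (cases "\<forall>\<beta>. \<alpha> \<le> \<beta>")
    case True
    have "\<forall>i\<in>?I. closedin (Xt i) (A i)" using less(3) Fclass_inv_zero[OF _ True nontriv] by blast
    thus ?thesis by (intro Fclass.zero[OF True] closed_combo)
  next
    case nz: False
    show ?thesis
    proof (cases "limit_or_zero \<alpha>")
      case False
      then obtain \<gamma> where g: "\<gamma> < \<alpha>" "\<forall>z. \<not> (\<gamma> < z \<and> z < \<alpha>)" unfolding limit_or_zero_def by blast
      have le\<gamma>: "\<beta> \<le> \<gamma>" if "\<beta> < \<alpha>" for \<beta> using g that by (metis leI)
      have gt: "\<gamma> < top" using g(1) less(2) by simp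
      show ?thesis
      proof (cases "ord_odd \<alpha>")
        case True
        have "\<forall>i\<in>?I. \<exists>B. A i = (\<Union>n. B n) \<and> (\<forall>n::nat. \<exists>\<beta><\<alpha>. Fclass (Xt i) \<beta> (B n))"
          using less(3) Fclass_inv_odd[OF _ less(2) nz True] by blast
        then obtain B where B: "\<forall>i\<in>?I. A i = (\<Union>n. B i n) \<and> (\<forall>n::nat. \<exists>\<beta><\<alpha>. Fclass (Xt i) \<beta> (B i n))"
          by metis
        have Bg: "\<forall>i\<in>?I. Fclass (Xt i) \<gamma> (B i n)" for n
        proof
          fix i assume i: "i \<in> ?I"
          obtain \<beta> where "\<beta> < \<alpha>" "Fclass (Xt i) \<beta> (B i n)" using B i by blast
          thus "Fclass (Xt i) \<gamma> (B i n)" using Fclass_mono le\<gamma> gt by blast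
        qed
        have "Fclass ?Z \<alpha> (\<Union>n. ?Y' \<union> (\<Union>i\<in>?I. B i n))"
          by (rule Fclass.odd_union[OF less(2) nz True]) (use less(1)[OF g(1) gt Bg] g(1) in blast)
        moreover have "(\<Union>n. ?Y' \<union> (\<Union>i\<in>?I. B i n)) = ?Y' \<union> (\<Union>i\<in>?I. A i)"
          using B by auto
        ultimately show ?thesis by simp
      next
        case odd: False
        have "\<forall>i\<in>?I. \<exists>B. A i = (\<Inter>n. B n) \<and> (\<forall>n::nat. \<exists>\<beta><\<alpha>. Fclass (Xt i) \<beta> (B n))"
          using less(3) Fclass_inv_even[OF _ less(2) nz odd] by blast
        then obtain B where B: "\<forall>i\<in>?I. A i = (\<Inter>n. B i n) \<and> (\<forall>n::nat. \<exists>\<beta><\<alpha>. Fclass (Xt i) \<beta> (B i n))"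
          by metis
        have Bg: "\<forall>i\<in>?I. Fclass (Xt i) \<gamma> (B i n)" for n
        proof
          fix i assume i: "i \<in> ?I"
          obtain \<beta> where "\<beta> < \<alpha>" "Fclass (Xt i) \<beta> (B i n)" using B i by blast
          thus "Fclass (Xt i) \<gamma> (B i n)" using Fclass_mono le\<gamma> gt by blast
        qed
        have Bsub: "\<forall>i\<in>?I. \<forall>n. B i n \<subseteq> topspace (Xt i)" using Bg Fclass_subset by blast
        have "Fclass ?Z \<alpha> (\<Inter>n. ?Y' \<union> (\<Union>i\<in>?I. B i n))"
          by (rule Fclass.even_inter[OF less(2) nz odd]) (use less(1)[OF g(1) gt Bg] g(1) in blast)
        moreover have "(\<Inter>n. ?Y' \<union> (\<Union>i\<in>?I. B i n)) = ?Y' \<union> (\<Union>i\<in>?I. A i)"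
        proof -
          have "?Y' \<union> (\<Union>i\<in>?I. A i) = ?Y' \<union> (\<Union>i\<in>?I. \<Inter>n. B i n)" using B by simp
          thus ?thesis using INT_combo[OF Bsub] by simp
        qed
        ultimately show ?thesis by simp
      qed
    next
      case lim: True
      have odd: "\<not> ord_odd \<alpha>" using lim_not_odd[OF lim] .
      have "\<forall>i\<in>?I. \<exists>B. A i = (\<Inter>n. B n) \<and> (\<forall>n::nat. \<exists>\<beta><\<alpha>. Fclass (Xt i) \<beta> (B n))"
        using less(3) Fclass_inv_even[OF _ less(2) nz odd] by blast
      hence "\<forall>i\<in>?I. \<exists>B lev. A i = (\<Inter>n. B n) \<and> (\<forall>n::nat. lev n < \<alpha> \<and> Fclass (Xt i) (lev n) (B n))"
        by metis
      then obtain B lev where B: "\<forall>i\<in>?I. A i = (\<Inter>n. B i n) \<and> (\<forall>n::nat. lev i n < \<alpha> \<and> Fclass (Xt i) (lev i n) (B i n))"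
        by metis
      define P where "P = {\<beta>. \<beta> < \<alpha>}"
      have Pc: "countable P" unfolding P_def by (rule ord_cnt[OF ord less(2)])
      obtain b0 where b0: "b0 < \<alpha>" using nz by (metis leI)
      have Pne: "P \<noteq> {}" using b0 unfolding P_def by blast
      define e where "e = from_nat_into P"
      have eP: "e n < \<alpha>" for n using from_nat_into[OF Pne] unfolding e_def P_def by blast
      have esurj: "\<exists>n. e n = \<beta>" if "\<beta> < \<alpha>" for \<beta>
        using from_nat_into_surj[OF Pc] that unfolding e_def P_def by blast
      define lam where "lam k = Max (e ` {..k})" for k
      have lam_lt: "lam k < \<alpha>" for k
      proof -
        have "lam k \<in> e ` {..k}" unfolding lam_def by (rule Max_in) auto
        then obtain m where "lam k = e m" by blast
        thus ?thesis using eP[of m] by simp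
      qed
      have lam_ge: "e k \<le> lam k" for k unfolding lam_def by (rule Max_ge) auto
      have nx: "lam k < nxt (lam k)" "nxt (lam k) < \<alpha>" "\<forall>z. \<not> (lam k < z \<and> z < nxt (lam k))" for k
      proof -
        obtain y where y: "lam k < y" "y < \<alpha>" using lim lam_lt unfolding limit_or_zero_def by blast
        show "lam k < nxt (lam k)" "\<forall>z. \<not> (lam k < z \<and> z < nxt (lam k))" using nxt_props[OF y(1)] by auto
        show "nxt (lam k) < \<alpha>" using nxt_props(2)[OF y(1)] y(2) by simp
      qed
      have nx2: "nxt (lam k) < nxt (nxt (lam k))" "nxt (nxt (lam k)) < \<alpha>"
         "\<forall>z. \<not> (nxt (lam k) < z \<and> z < nxt (nxt (lam k)))" for k
      proof -
        obtain y where y: "nxt (lam k) < y" "y < \<alpha>" using lim nx(2) unfolding limit_or_zero_def by blast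
        show "nxt (lam k) < nxt (nxt (lam k))" "\<forall>z. \<not> (nxt (lam k) < z \<and> z < nxt (nxt (lam k)))"
          using nxt_props[OF y(1)] by auto
        show "nxt (nxt (lam k)) < \<alpha>" using nxt_props(2)[OF y(1)] y(2) by simp
      qed
      define \<delta> where "\<delta> k = (if ord_odd (nxt (lam k)) then nxt (nxt (lam k)) else nxt (lam k))" for k
      have d1: "lam k < \<delta> k" "\<delta> k < \<alpha>" "\<not> ord_odd (\<delta> k)" for k
      proof -
        show "lam k < \<delta> k" unfolding \<delta>_def using nx(1)[of k] nx2(1)[of k] by auto
        show "\<delta> k < \<alpha>" unfolding \<delta>_def using nx(2)[of k] nx2(2)[of k] by auto
        show "\<not> ord_odd (\<delta> k)" unfolding \<delta>_def using odd_flip[OF nx2(1) nx2(3)] by auto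
      qed
      have dtop: "\<delta> k < top" for k using d1(2) less(2) by (meson less_trans)
      have dnz: "\<not> (\<forall>\<beta>. \<delta> k \<le> \<beta>)" for k using d1(1)[of k] by (meson leD)
      define C where "C i k = (\<Inter>n. if lev i n \<le> lam k then B i n else topspace (Xt i))" for i k
      have Cf: "\<forall>i\<in>?I. Fclass (Xt i) (\<delta> k) (C i k)" for k
      proof
        fix i assume i: "i \<in> ?I"
        show "Fclass (Xt i) (\<delta> k) (C i k)" unfolding C_def
        proof (rule Fclass.even_inter[OF dtop dnz d1(3)], rule allI)
          fix n
          show "\<exists>\<beta><\<delta> k. Fclass (Xt i) \<beta> (if lev i n \<le> lam k then B i n else topspace (Xt i))"
          proof (cases "lev i n \<le> lam k")
            case True
            hence "lev i n < \<delta> k" using d1(1)[of k] by simp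
            thus ?thesis using True B i by auto
          next
            case False
            have "bot0 < \<delta> k" using bot0_le[of "lam k"] d1(1)[of k] by simp
            thus ?thesis using False Fclass_topspace by auto
          qed
        qed
      qed
      have Csub: "\<forall>i\<in>?I. \<forall>k. C i k \<subseteq> topspace (Xt i)" using Cf Fclass_subset by blast
      have AC: "A i = (\<Inter>k. C i k)" if i: "i \<in> ?I" for i
      proof (intro equalityI subsetI)
        fix x assume x: "x \<in> A i"
        have xt: "x \<in> topspace (Xt i)" using x Asub i by blast
        have xB: "x \<in> B i n" for n using x B i by blast
        have "x \<in> C i k" for k
          unfolding C_def using xt xB by auto
        thus "x \<in> (\<Inter>k. C i k)" by blast
      next
        fix x assume x: "x \<in> (\<Inter>k. C i k)"
        have "x \<in> B i n" for n
        proof -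
          obtain k where k: "e k = lev i n" using esurj B i by blast
          have "lev i n \<le> lam k" using lam_ge[of k] k by simp
          moreover have "x \<in> C i k" using x by blast
          ultimately show ?thesis unfolding C_def by auto
        qed
        thus "x \<in> A i" using B i by auto
      qed
      have "Fclass ?Z \<alpha> (\<Inter>k. ?Y' \<union> (\<Union>i\<in>?I. C i k))"
        by (rule Fclass.even_inter[OF less(2) nz odd]) (use less(1)[OF d1(2) dtop Cf] d1(2) in blast)
      moreover have "(\<Inter>k. ?Y' \<union> (\<Union>i\<in>?I. C i k)) = ?Y' \<union> (\<Union>i\<in>?I. A i)"
      proof -
        have "?Y' \<union> (\<Union>i\<in>?I. A i) = ?Y' \<union> (\<Union>i\<in>?I. \<Inter>k. C i k)" using AC by simp
        thus ?thesis using INT_combo[OF Csub] by simp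
      qed
      ultimately show ?thesis by simp
    qed
  qed
qed

end



context zsetup
begin

lemma ord_sup_ge:
  fixes S :: "'o::{wellorder,order_top} set"
  shows "\<beta> \<in> S \<Longrightarrow> \<beta> \<le> ord_sup S"
proof -
  assume b: "\<beta> \<in> S"
  have "\<forall>\<beta>\<in>S. \<beta> \<le> ord_sup S" unfolding ord_sup_def by (rule LeastI[of _ top]) simp
  thus ?thesis using b by blast
qed

lemma ord_sup_le:
  fixes S :: "'o::{wellorder,order_top} set"
  shows "\<forall>\<beta>\<in>S. \<beta> \<le> c \<Longrightarrow> ord_sup S \<le> c"
  unfolding ord_sup_def by (rule Least_le)

lemma Compl_least:
  assumes "Fclass B (top::'o::{wellorder,order_top}) A"
  shows "Fclass B (Complexity A B :: 'o) A" "\<And>\<alpha>::'o. Fclass B \<alpha> A \<Longrightarrow> Complexity A B \<le> \<alpha>"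
proof -
  show "Fclass B (Complexity A B :: 'o) A" unfolding Complexity_def using assms by (rule LeastI)
  show "\<And>\<alpha>::'o. Fclass B \<alpha> A \<Longrightarrow> Complexity A B \<le> \<alpha>" unfolding Complexity_def by (rule Least_le)
qed

lemma main:
  assumes ord: "omega1_plus_one_type TYPE('o::{wellorder,order_top})"
  shows "topspace (zoom_space Y X) \<subseteq> topspace (zoom_space Yt Xt)
     \<and> zoom_space Y X = subtopology (zoom_space Yt Xt) (topspace (zoom_space Y X))
     \<and> ((Compl_defined (topspace (zoom_space Y X)) (zoom_space Yt Xt) TYPE('o)
          \<or> (Compl_defined (topspace Y) Yt TYPE('o)
             \<and> (\<forall>i \<in> isolated_points Y. Compl_defined (topspace (X i)) (Xt i) TYPE('o))))
        \<longrightarrow> Compl_defined (topspace (zoom_space Y X)) (zoom_space Yt Xt) TYPE('o)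
          \<and> Compl_defined (topspace Y) Yt TYPE('o)
          \<and> (\<forall>i \<in> isolated_points Y. Compl_defined (topspace (X i)) (Xt i) TYPE('o))
          \<and> (Complexity (topspace (zoom_space Y X)) (zoom_space Yt Xt) :: 'o)
             = max (Complexity (topspace Y) Yt)
                   (ord_sup ((\<lambda>i. Complexity (topspace (X i)) (Xt i)) ` isolated_points Y)))"
proof -
  let ?I = "isolated_points Y" and ?Z = "zoom_space Yt Xt"
  have nontriv: "\<exists>b::'o. b < top" using ord_nontriv[OF ord] .
  have P1: "topspace (zoom_space Y X) \<subseteq> topspace ?Z" using topZ SY_sub by simp
  have P2: "zoom_space Y X = subtopology ?Z (topspace (zoom_space Y X))"
    by (subst topZ) (rule Z_sub)
  have toY: "Fclass Yt \<alpha> (topspace Y)" if "Fclass ?Z (\<alpha>::'o) SY" for \<alpha>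
    using Fclass_preimage[OF that emb_cont] emb_pre by simp
  have toX: "Fclass (Xt i) \<alpha> (topspace (X i))" if "Fclass ?Z (\<alpha>::'o) SY" "i \<in> ?I" for \<alpha> i
    using Fclass_preimage[OF that(1) incl_cont[OF that(2)]] incl_pre[OF that(2)] by simp
  have toG: "Fclass ?Z \<alpha> {z \<in> topspace ?Z. gmap z \<in> topspace Y}" if "Fclass Yt (\<alpha>::'o) (topspace Y)" for \<alpha>
    using Fclass_preimage[OF that gmap_cont] .
  have TTeq: "TT = (topspace Yt - ?I) \<union> (\<Union>i\<in>?I. topspace (X i))" unfolding TT_def ..
  have D: "Fclass ?Z (top::'o) SY \<longleftrightarrow>
      (Fclass Yt (top::'o) (topspace Y) \<and> (\<forall>i\<in>?I. Fclass (Xt i) (top::'o) (topspace (X i))))"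
  proof
    assume "Fclass ?Z (top::'o) SY"
    thus "Fclass Yt (top::'o) (topspace Y) \<and> (\<forall>i\<in>?I. Fclass (Xt i) (top::'o) (topspace (X i)))"
      using toY toX by blast
  next
    assume a: "Fclass Yt (top::'o) (topspace Y) \<and> (\<forall>i\<in>?I. Fclass (Xt i) (top::'o) (topspace (X i)))"
    have "Fclass ?Z (top::'o) TT" unfolding TTeq using a by (intro Tlem_top) blast
    thus "Fclass ?Z (top::'o) SY" unfolding SY_split using Fclass_Int_top toG a by blast
  qed
  have P3: "(Complexity SY ?Z :: 'o) = max (Complexity (topspace Y) Yt)
                   (ord_sup ((\<lambda>i. Complexity (topspace (X i)) (Xt i)) ` ?I))"
    if FZ: "Fclass ?Z (top::'o) SY"
  proof -
    let ?c = "Complexity SY ?Z :: 'o" and ?a = "Complexity (topspace Y) Yt :: 'o"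
      and ?s = "ord_sup ((\<lambda>i. Complexity (topspace (X i)) (Xt i) :: 'o) ` ?I)"
    have FY: "Fclass Yt (top::'o) (topspace Y)" and FX: "\<forall>i\<in>?I. Fclass (Xt i) (top::'o) (topspace (X i))"
      using D FZ by auto
    have Fc: "Fclass ?Z ?c SY" using Compl_least(1)[OF FZ] .
    have ac: "?a \<le> ?c" using Compl_least(2)[OF FY toY[OF Fc]] .
    have bc: "Complexity (topspace (X i)) (Xt i) \<le> ?c" if i: "i \<in> ?I" for i
      using Compl_least(2)[OF bspec[OF FX i] toX[OF Fc i]] .
    have sc: "?s \<le> ?c" by (rule ord_sup_le) (use bc in blast)
    have cm: "?c \<le> max ?a ?s"
    proof (cases "max ?a ?s = top")
      case True thus ?thesis by simp
    next
      case False
      hence mt: "max ?a ?s < top" using top.not_eq_extremum by blast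
      have "Fclass Yt (max ?a ?s) (topspace Y)"
        using Fclass_mono[OF Compl_least(1)[OF FY] _ mt] by simp
      hence G: "Fclass ?Z (max ?a ?s) {z \<in> topspace ?Z. gmap z \<in> topspace Y}" by (rule toG)
      have "\<forall>i\<in>?I. Fclass (Xt i) (max ?a ?s) (topspace (X i))"
      proof
        fix i assume i: "i \<in> ?I"
        have "Complexity (topspace (X i)) (Xt i) \<le> ?s" using i by (intro ord_sup_ge) blast
        hence "Complexity (topspace (X i)) (Xt i) \<le> max ?a ?s" by (rule order.trans[OF _ max.cobounded2])
        thus "Fclass (Xt i) (max ?a ?s) (topspace (X i))"
          using Fclass_mono[OF Compl_least(1)[OF bspec[OF FX i]] _ mt] by simp
      qed
      hence "Fclass ?Z (max ?a ?s) TT" unfolding TTeq by (rule Tlem[OF ord mt])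
      hence "Fclass ?Z (max ?a ?s) SY" unfolding SY_split using Fclass_Int_lt[OF mt nontriv] G by blast
      thus ?thesis by (rule Compl_least(2)[OF FZ])
    qed
    show ?thesis using ac sc cm by (simp add: antisym)
  qed
  have P4: "(Compl_defined (topspace (zoom_space Y X)) (zoom_space Yt Xt) TYPE('o)
          \<or> (Compl_defined (topspace Y) Yt TYPE('o)
             \<and> (\<forall>i \<in> isolated_points Y. Compl_defined (topspace (X i)) (Xt i) TYPE('o))))
        \<longrightarrow> Compl_defined (topspace (zoom_space Y X)) (zoom_space Yt Xt) TYPE('o)
          \<and> Compl_defined (topspace Y) Yt TYPE('o)
          \<and> (\<forall>i \<in> isolated_points Y. Compl_defined (topspace (X i)) (Xt i) TYPE('o))
          \<and> (Complexity (topspace (zoom_space Y X)) (zoom_space Yt Xt) :: 'o)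
             = max (Complexity (topspace Y) Yt)
                   (ord_sup ((\<lambda>i. Complexity (topspace (X i)) (Xt i)) ` isolated_points Y))"
    unfolding Compl_defined_def topZ
  proof (intro impI)
    assume h: "Fclass ?Z (top::'o) SY \<or> (Fclass Yt (top::'o) (topspace Y) \<and> (\<forall>i\<in>?I. Fclass (Xt i) (top::'o) (topspace (X i))))"
    hence FZ: "Fclass ?Z (top::'o) SY" using D by blast
    hence FYX: "Fclass Yt (top::'o) (topspace Y) \<and> (\<forall>i\<in>?I. Fclass (Xt i) (top::'o) (topspace (X i)))"
      using D by blast
    show "Fclass ?Z (top::'o) SY \<and> Fclass Yt (top::'o) (topspace Y) \<and> (\<forall>i\<in>?I. Fclass (Xt i) (top::'o) (topspace (X i)))
      \<and> (Complexity SY ?Z :: 'o) = max (Complexity (topspace Y) Yt)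
                   (ord_sup ((\<lambda>i. Complexity (topspace (X i)) (Xt i)) ` ?I))"
      using FZ FYX P3[OF FZ] by blast
  qed
  show ?thesis by (intro conjI P1 P2 P4)
qed

end

lemma zsetup_final:
  fixes Y Yt :: "'a topology"
    and X Xt :: "'a \<Rightarrow> 'a topology"
  assumes ord: "omega1_plus_one_type TYPE('o::{wellorder,order_top})"
    and tych_Yt: "tychonoff_space Yt"
    and Y_sub: "topspace Y \<subseteq> topspace Yt" "Y = subtopology Yt (topspace Y)"
    and Y_dense: "Yt closure_of (topspace Y) = topspace Yt"
    and X_ne: "\<forall>i \<in> isolated_points Y. topspace (X i) \<noteq> {}"
    and X_sub: "\<forall>i \<in> isolated_points Y. topspace (X i) \<subseteq> topspace (Xt i)
                   \<and> X i = subtopology (Xt i) (topspace (X i))"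
    and Xt_disj: "\<forall>i \<in> isolated_points Y. \<forall>j \<in> isolated_points Y.
                   i \<noteq> j \<longrightarrow> topspace (Xt i) \<inter> topspace (Xt j) = {}"
    and Xt_disj_Yt: "\<forall>i \<in> isolated_points Y. topspace (Xt i) \<inter> nonisolated_points Yt = {}"
  shows "zsetup Y Yt X Xt"
proof (rule zsetup.intro)
  show "t1_space Yt" using tych_Yt unfolding tychonoff_space_def by (rule conjunct2)
qed (fact Y_sub Y_dense X_ne X_sub Xt_disj Xt_disj_Yt)+



theorem proposition4p3:
  fixes Y Yt :: "'a topology"
    and X Xt :: "'a \<Rightarrow> 'a topology"
  assumes ord: "omega1_plus_one_type TYPE('o::{wellorder,order_top})"
    and tych_Yt: "tychonoff_space Yt"
    and tych_Xt: "\<forall>i \<in> isolated_points Y. tychonoff_space (Xt i)"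
    and Y_sub: "topspace Y \<subseteq> topspace Yt" "Y = subtopology Yt (topspace Y)"
    and Y_dense: "Yt closure_of (topspace Y) = topspace Yt"
    and X_ne: "\<forall>i \<in> isolated_points Y. topspace (X i) \<noteq> {}"
    and X_sub: "\<forall>i \<in> isolated_points Y. topspace (X i) \<subseteq> topspace (Xt i)
                   \<and> X i = subtopology (Xt i) (topspace (X i))"
    and Xt_disj: "\<forall>i \<in> isolated_points Y. \<forall>j \<in> isolated_points Y.
                   i \<noteq> j \<longrightarrow> topspace (Xt i) \<inter> topspace (Xt j) = {}"
    and Xt_disj_Yt: "\<forall>i \<in> isolated_points Y. topspace (Xt i) \<inter> nonisolated_points Yt = {}"
  shows "topspace (zoom_space Y X) \<subseteq> topspace (zoom_space Yt Xt)
     \<and> zoom_space Y X = subtopology (zoom_space Yt Xt) (topspace (zoom_space Y X))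
     \<and> ((Compl_defined (topspace (zoom_space Y X)) (zoom_space Yt Xt) TYPE('o)
          \<or> (Compl_defined (topspace Y) Yt TYPE('o)
             \<and> (\<forall>i \<in> isolated_points Y. Compl_defined (topspace (X i)) (Xt i) TYPE('o))))
        \<longrightarrow> Compl_defined (topspace (zoom_space Y X)) (zoom_space Yt Xt) TYPE('o)
          \<and> Compl_defined (topspace Y) Yt TYPE('o)
          \<and> (\<forall>i \<in> isolated_points Y. Compl_defined (topspace (X i)) (Xt i) TYPE('o))
          \<and> (Complexity (topspace (zoom_space Y X)) (zoom_space Yt Xt) :: 'o)
             = max (Complexity (topspace Y) Yt)
                   (ord_sup ((\<lambda>i. Complexity (topspace (X i)) (Xt i)) ` isolated_points Y)))"
proof -
  have "zsetup Y Yt X Xt"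
    by (rule zsetup_final[OF ord tych_Yt Y_sub Y_dense X_ne X_sub Xt_disj Xt_disj_Yt])
  thus ?thesis by (rule zsetup.main[OF _ ord])
qed

end
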